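(* Let $\boldsymbol{u}^\star\in\mathbb{R}^n\setminus\{\boldsymbol{0}\}$ and $f(\boldsymbol{u})=\frac12\|\boldsymbol{u}\boldsymbol{u}^{\mathrm T}-\boldsymbol{u}^\star{\boldsymbol{u}^\star}^{\mathrm T}\|_1$ on $\mathbb{R}^n$. Let $\boldsymbol{u}$ be any spurious stationary point of $f$ and let $\boldsymbol{w}=\boldsymbol{u}^\star-\boldsymbol{u}$ or $\boldsymbol{w}=-\boldsymbol{u}^\star-\boldsymbol{u}$. Then: (i) $d^2f(\boldsymbol{u})(\boldsymbol{w})=-\|\boldsymbol{u}^\star\|_1^2<0$; (ii) $\inf_{\boldsymbol{z}\in\mathbb{R}^n}d^2f(\boldsymbol{u})(\boldsymbol{w}\,|\,\boldsymbol{z})=-\|\boldsymbol{u}^\star\|_1^2<0$, i.e. for every $\varepsilon>0$ there is $\boldsymbol{z}\in\mathbb{R}^n$ with $d^2f(\boldsymbol{u})(\boldsymbol{w}\,|\,\boldsymbol{z})<-\|\boldsymbol{u}^\star\|_1^2+\varepsilon$; (iii) $f''(\boldsymbol{u};\boldsymbol{w})=-\|\boldsymbol{u}^\star\|_1^2<0$.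
   Context: $\|\cdot\|_1$ is the entrywise $\ell_1$-norm. $df(\boldsymbol{x})(\boldsymbol{w})=\lim_{t\searrow0}(f(\boldsymbol{x}+t\boldsymbol{w})-f(\boldsymbol{x}))/t$ (directional derivative). Second subderivative (no $\boldsymbol{v}$): $d^2f(\boldsymbol{x})(\boldsymbol{w})=\liminf_{t\searrow0,\boldsymbol{w}'\to\boldsymbol{w}}\frac{f(\boldsymbol{x}+t\boldsymbol{w}')-f(\boldsymbol{x})-t\,df(\boldsymbol{x})(\boldsymbol{w}')}{t^2/2}$. Parabolic subderivative: $d^2f(\boldsymbol{x})(\boldsymbol{w}\,|\,\boldsymbol{z})=\liminf_{t\searrow0,\boldsymbol{z}'\to\boldsymbol{z}}\frac{f(\boldsymbol{x}+t\boldsymbol{w}+\frac12t^2\boldsymbol{z}')-f(\boldsymbol{x})-t\,df(\boldsymbol{x})(\boldsymbol{w})}{t^2/2}$. One-sided second directional derivative: $f''(\boldsymbol{x};\boldsymbol{w})=\lim_{t\searrow0}\frac{f(\boldsymbol{x}+t\boldsymbol{w})-f(\boldsymbol{x})-t\,df(\boldsymbol{x})(\boldsymbol{w})}{t^2/2}$. A point $\boldsymbol{u}$ is stationary if $\boldsymbol{0}\in\partial f(\boldsymbol{u})$, where $\partial f(\boldsymbol{u})=\{\boldsymbol{Z}\boldsymbol{u}:\boldsymbol{Z}\text{ symmetric}, \boldsymbol{Z}\in\operatorname{Sign}(\boldsymbol{u}\boldsymbol{u}^{\mathrm T}-\boldsymbol{u}^\star{\boldsymbol{u}^\star}^{\mathrm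 T})\}$ (entrywise set-valued sign, $\operatorname{Sign}(0)=[-1,1]$); it is spurious if additionally $\boldsymbol{u}\notin\{\pm\boldsymbol{u}^\star\}$. *)

theory Defs
  imports "HOL-Analysis.Analysis" "HOL-Library.Extended_Real"
begin

definition l1norm :: "real ^ 'n \<Rightarrow> real" where
  "l1norm v = (\<Sum>i\<in>UNIV. \<bar>v $ i\<bar>)"

definition rpca_f :: "real ^ 'n \<Rightarrow> real ^ 'n \<Rightarrow> real" where
  "rpca_f ustar u = (1/2) * (\<Sum>i\<in>UNIV. \<Sum>j\<in>UNIV. \<bar>u $ i * u $ j - ustar $ i * ustar $ j\<bar>)"

definition dirderiv :: "(real ^ 'n \<Rightarrow> real) \<Rightarrow> real ^ 'n \<Rightarrow> real ^ 'n \<Rightarrow> real" where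
  "dirderiv f x w = Lim (at_right 0) (\<lambda>t. (f (x + t *\<^sub>R w) - f x) / t)"

definition second_subderiv :: "(real ^ 'n \<Rightarrow> real) \<Rightarrow> real ^ 'n \<Rightarrow> real ^ 'n \<Rightarrow> ereal" where
  "second_subderiv f x w =
     Liminf (at_right 0 \<times>\<^sub>F nhds w)
       (\<lambda>(t, w'). ereal ((f (x + t *\<^sub>R w') - f x - t * dirderiv f x w') / (t\<^sup>2 / 2)))"

definition parabolic_subderiv ::
  "(real ^ 'n \<Rightarrow> real) \<Rightarrow> real ^ 'n \<Rightarrow> real ^ 'n \<Rightarrow> real ^ 'n \<Rightarrow> ereal" where
  "parabolic_subderiv f x w z =
     Liminf (at_right 0 \<times>\<^sub>F nhds z)
       (\<lambda>(t, z'). ereal ((f (x + t *\<^sub>R w + ((1/2) * t\<^sup>2) *\<^sub>R z') - f x - t * dirderiv f x w)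
                          / (t\<^sup>2 / 2)))"

definition Sign :: "real \<Rightarrow> real set" where
  "Sign a = (if a > 0 then {1} else if a < 0 then {-1} else {-1..1})"

definition rpca_subdiff :: "real ^ 'n \<Rightarrow> real ^ 'n \<Rightarrow> (real ^ 'n) set" where
  "rpca_subdiff ustar u =
     {Z *v u | Z :: real ^ 'n ^ 'n. transpose Z = Z \<and>
        (\<forall>i j. Z $ i $ j \<in> Sign (u $ i * u $ j - ustar $ i * ustar $ j))}"

definition stationary :: "real ^ 'n \<Rightarrow> real ^ 'n \<Rightarrow> bool" where
  "stationary ustar u \<longleftrightarrow> 0 \<in> rpca_subdiff ustar u"

definition spurious_stationary :: "real ^ 'n \<Rightarrow> real ^ 'n \<Rightarrow> bool" where
  "spurious_stationary ustar u \<longleftrightarrow> stationary ustar u \<and> u \<notin> {ustar, - ustar}"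

end

theory Submission
  imports Defs
begin


lemma Sign_mult_abs: "z \<in> Sign m \<Longrightarrow> z * m = \<bar>m\<bar>"
  by (auto simp: Sign_def split: if_splits)

lemma Sign_abs_le: "z \<in> Sign m \<Longrightarrow> \<bar>z\<bar> \<le> 1"
  by (auto simp: Sign_def split: if_splits)

lemma Sign_pos: "m > 0 \<Longrightarrow> z \<in> Sign m \<Longrightarrow> z = 1"
  by (auto simp: Sign_def)

lemma Sign_neg: "m < 0 \<Longrightarrow> z \<in> Sign m \<Longrightarrow> z = -1"
  by (auto simp: Sign_def)

lemma Sign_zero: "\<bar>z\<bar> \<le> 1 \<Longrightarrow> z \<in> Sign 0"
  by (auto simp: Sign_def)

lemma Sign_flip: "c = 1 \<or> c = -1 \<Longrightarrow> z \<in> Sign m \<Longrightarrow> c * z \<in> Sign (c * m)"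
  by (auto simp: Sign_def zero_less_mult_iff mult_less_0_iff split: if_splits)

lemma Liminf_le_filter: "G \<le> F \<Longrightarrow> Liminf F f \<le> Liminf G f"
  unfolding Liminf_def by (rule SUP_subset_mono) (auto simp: le_filter_def)

definition phi :: "real \<Rightarrow> real \<Rightarrow> real" where
  "phi c b = (if c = 0 then \<bar>b\<bar> else sgn c * b)"

lemma scalar_ineq:
  assumes "t > 0"
  shows "\<bar>c + b*t + a*t\<^sup>2\<bar> - \<bar>c\<bar> - t * phi c b \<ge> - (t\<^sup>2 * \<bar>a\<bar>)"
proof (cases "c = 0")
  case True
  have "\<bar>b*t + a*t\<^sup>2\<bar> \<ge> \<bar>b*t\<bar> - \<bar>a*t\<^sup>2\<bar>" by linarith
  then show ?thesis using True assms by (simp add: phi_def abs_mult algebra_simps)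
next
  case False
  have "\<bar>c + b*t + a*t\<^sup>2\<bar> \<ge> sgn c * (c + b*t + a*t\<^sup>2)"
    using False abs_ge_self[of "c + b*t + a*t\<^sup>2"] abs_ge_minus_self[of "c + b*t + a*t\<^sup>2"]
    by (cases "c > 0") (simp_all add: sgn_if)
  moreover have "sgn c * c = \<bar>c\<bar>" by (cases "c > 0") (auto simp: sgn_if)
  moreover have "sgn c * (a*t\<^sup>2) \<ge> - (t\<^sup>2 * \<bar>a\<bar>)"
  proof -
    have h: "\<bar>a*t\<^sup>2\<bar> = t\<^sup>2 * \<bar>a\<bar>" by (simp add: abs_mult)
    show ?thesis using h abs_ge_self[of "a*t\<^sup>2"] abs_ge_minus_self[of "a*t\<^sup>2"] False
      by (cases "c > 0") (simp_all add: sgn_if)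
  qed
  ultimately show ?thesis using False by (simp add: phi_def algebra_simps)
qed

lemma scalar_lim:
  "((\<lambda>t. (\<bar>c + b*t + a*t\<^sup>2\<bar> - \<bar>c\<bar>) / t) \<longlongrightarrow> phi c b) (at_right 0)"
proof (cases "c = 0")
  case True
  have "((\<lambda>t. \<bar>b + a*t\<bar>) \<longlongrightarrow> \<bar>b + a*0\<bar>) (at_right 0)"
    by (intro tendsto_intros)
  then have L: "((\<lambda>t. \<bar>b + a*t\<bar>) \<longlongrightarrow> phi c b) (at_right (0::real))" using True by (simp add: phi_def)
  have "\<forall>\<^sub>F t in at_right 0. \<bar>b + a*t\<bar> = (\<bar>c + b*t + a*t\<^sup>2\<bar> - \<bar>c\<bar>) / t"
  proof (rule eventually_mono[OF eventually_at_right_less[of "0::real"]])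
    fix t :: real assume t: "0 < t"
    have "b*t + a*t\<^sup>2 = t * (b + a*t)" by (simp add: power2_eq_square algebra_simps)
    then have "\<bar>b*t + a*t\<^sup>2\<bar> = t * \<bar>b + a*t\<bar>" using t by (simp add: abs_mult)
    then show "\<bar>b + a*t\<bar> = (\<bar>c + b*t + a*t\<^sup>2\<bar> - \<bar>c\<bar>) / t" using t True by simp
  qed
  then show ?thesis by (rule Lim_transform_eventually[OF L])
next
  case False
  have "((\<lambda>t. c + b*t + a*t\<^sup>2) \<longlongrightarrow> c + b*0 + a*0\<^sup>2) (at_right (0::real))"
    by (intro tendsto_intros)
  then have T: "((\<lambda>t. c + b*t + a*t\<^sup>2) \<longlongrightarrow> c) (at_right (0::real))" by simp
  have "\<forall>\<^sub>F t in at_right 0. dist (c + b*t + a*t\<^sup>2) c < \<bar>c\<bar>"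
    using tendstoD[OF T] False by simp
  then have ev: "\<forall>\<^sub>F t in at_right 0. 0 < t \<and> dist (c + b*t + a*t\<^sup>2) c < \<bar>c\<bar>"
    using eventually_at_right_less[of "0::real"] by (simp add: eventually_conj)
  have L: "((\<lambda>t. sgn c * (b + a*t)) \<longlongrightarrow> sgn c * (b + a*0)) (at_right (0::real))"
    by (intro tendsto_intros)
  have "\<forall>\<^sub>F t in at_right 0. sgn c * (b + a*t) = (\<bar>c + b*t + a*t\<^sup>2\<bar> - \<bar>c\<bar>) / t"
  proof (rule eventually_mono[OF ev])
    fix t :: real assume t: "0 < t \<and> dist (c + b*t + a*t\<^sup>2) c < \<bar>c\<bar>"
    have "\<bar>c + b*t + a*t\<^sup>2\<bar> = sgn c * (c + b*t + a*t\<^sup>2)"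
      using t False by (cases "c > 0") (auto simp: dist_real_def sgn_if)
    moreover have "sgn c * c = \<bar>c\<bar>" by (cases "c > 0") (auto simp: sgn_if)
    ultimately have "\<bar>c + b*t + a*t\<^sup>2\<bar> - \<bar>c\<bar> = t * (sgn c * (b + a*t))"
      by (simp add: algebra_simps power2_eq_square)
    then show "sgn c * (b + a*t) = (\<bar>c + b*t + a*t\<^sup>2\<bar> - \<bar>c\<bar>) / t" using t by simp
  qed
  from Lim_transform_eventually[OF L this] show ?thesis using False by (simp add: phi_def)
qed



lemma block:
  fixes a x :: "'n::finite \<Rightarrow> real" and Y :: "'n \<Rightarrow> 'n \<Rightarrow> real" and q :: real
  assumes sym: "\<And>i j. Y i j = Y j i"
    and sg: "\<And>i j. Y i j \<in> Sign (x i * x j - a i * a j)"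
    and apos: "\<And>i. x i > 0 \<Longrightarrow> a i > 0"
    and q: "q \<ge> 0"
    and rows: "\<And>i. x i > 0 \<Longrightarrow> (\<Sum>j\<in>{j. x j > 0}. Y i j * x j) = -q"
    and i1: "x i1 > 0"
  shows "x i1 \<le> a i1"
proof (rule ccontr)
  assume "\<not> ?thesis" hence big: "x i1 > a i1" by simp
  define P where "P = {j. x j > 0}"
  define r where "r j = x j / a j" for j
  define A where "A = Max (r ` P)"
  have finP: "finite P" by simp
  have i1P: "i1 \<in> P" using i1 P_def by simp
  have rle: "\<And>j. j\<in>P \<Longrightarrow> r j \<le> A" using finP unfolding A_def by auto
  have "A \<in> r ` P" unfolding A_def using finP i1P by (intro Max_in) auto
  then obtain i0 where i0P: "i0 \<in> P" and ri0: "r i0 = A" by auto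
  have xr: "x j = r j * a j" if "j \<in> P" for j
  proof -
    have "a j > 0" using apos that P_def by simp
    then show ?thesis unfolding r_def by simp
  qed
  have rpos: "\<And>j. j\<in>P \<Longrightarrow> r j > 0" using apos unfolding P_def r_def by auto
  have "r i1 > 1" using big apos[OF i1] unfolding r_def by simp
  then have A1: "A > 1" using rle[OF i1P] by simp
  have "1/A < 1" using A1 by simp
  then have Ainv: "1/A < A" using A1 by linarith
  define R where "R = {j\<in>P. r j = A}"
  define Q where "Q = {j\<in>P. r j \<le> 1/A}"
  define T where "T = {j\<in>P. r j > 1/A}"
  define U where "U = {j\<in>P. r j < A}"
  have PTQ: "P = T \<union> Q" "T \<inter> Q = {}" unfolding T_def Q_def by auto
  have PRU: "P = R \<union> U" "R \<inter> U = {}" unfolding R_def U_def using rle by force+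
  have RT: "R \<subseteq> T" unfolding R_def T_def using Ainv by auto
  have QU: "Q \<subseteq> U" unfolding Q_def U_def using Ainv by auto
  have i0R: "i0 \<in> R" unfolding R_def using i0P ri0 by simp
  have Y1: "Y i j = 1" if "i \<in> R" "j \<in> T" for i j
  proof -
    have "1/A < r j" using that unfolding T_def by simp
    then have "A * (1/A) < A * r j" using A1 by (intro mult_strict_left_mono) auto
    then have Ar: "A * r j - 1 > 0" using A1 by simp
    have "x i = A * a i" "x j = r j * a j" using xr that R_def T_def by auto
    then have "x i * x j - a i * a j = (A * r j - 1) * (a i * a j)" by (simp add: algebra_simps)
    moreover have "a i * a j > 0" using apos that unfolding R_def T_def P_def by auto
    ultimately have "x i * x j - a i * a j > 0" using Ar by simp
    then show ?thesis using Sign_pos sg by blast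
  qed
  have Ym1: "Y k j = -1" if "k \<in> Q" "j \<in> U" for k j
  proof -
    have rk: "r k \<le> 1/A" "r k > 0" using that rpos unfolding Q_def by auto
    have rj: "r j < A" "r j > 0" using that rpos unfolding U_def by auto
    have "r k * r j \<le> (1/A) * r j" using rk rj by (intro mult_right_mono) auto
    also have "\<dots> < (1/A) * A" using rj A1 by (intro mult_strict_left_mono) auto
    also have "\<dots> = 1" using A1 by simp
    finally have rr: "r k * r j < 1" .
    have "x k = r k * a k" "x j = r j * a j" using xr that Q_def U_def by auto
    then have "x k * x j - a k * a j = (r k * r j - 1) * (a k * a j)" by (simp add: algebra_simps)
    moreover have "a k * a j > 0" using apos that unfolding Q_def U_def P_def by auto
    ultimately have "x k * x j - a k * a j < 0" using rr by (simp add: mult_neg_pos)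
    then show ?thesis using Sign_neg sg by blast
  qed
  define sR where "sR = sum x R"
  define sQ where "sQ = sum x Q"
  define sT where "sT = sum x T"
  define sU where "sU = sum x U"
  define W where "W = (\<Sum>i\<in>R. \<Sum>j\<in>Q. x i * Y i j * x j)"
  have fin: "finite R" "finite Q" "finite T" "finite U" by simp_all
  have eqR: "sT + (\<Sum>j\<in>Q. Y i j * x j) = -q" if "i \<in> R" for i
  proof -
    have "x i > 0" using that unfolding R_def P_def by simp
    then have "-q = (\<Sum>j\<in>P. Y i j * x j)" using rows P_def by simp
    also have "\<dots> = (\<Sum>j\<in>T. Y i j * x j) + (\<Sum>j\<in>Q. Y i j * x j)"
      unfolding PTQ(1) by (rule sum.union_disjoint) (use PTQ fin in auto)
    also have "(\<Sum>j\<in>T. Y i j * x j) = sT" unfolding sT_def using Y1 that by simp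
    finally show ?thesis by simp
  qed
  have eqQ: "(\<Sum>j\<in>R. Y k j * x j) - sU = -q" if "k \<in> Q" for k
  proof -
    have "x k > 0" using that unfolding Q_def P_def by simp
    then have "-q = (\<Sum>j\<in>P. Y k j * x j)" using rows P_def by simp
    also have "\<dots> = (\<Sum>j\<in>R. Y k j * x j) + (\<Sum>j\<in>U. Y k j * x j)"
      unfolding PRU(1) by (rule sum.union_disjoint) (use PRU fin in auto)
    also have "(\<Sum>j\<in>U. Y k j * x j) = - sU" unfolding sU_def using Ym1 that by (simp add: sum_negf)
    finally show ?thesis by simp
  qed
  have a: "sR * sT + W = - q * sR"
  proof -
    have "(\<Sum>i\<in>R. x i * (sT + (\<Sum>j\<in>Q. Y i j * x j))) = (\<Sum>i\<in>R. x i * (-q))"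
      using eqR by simp
    then show ?thesis unfolding sR_def W_def
      by (simp add: algebra_simps sum.distrib sum_distrib_left sum_distrib_right)
  qed
  have W2: "(\<Sum>k\<in>Q. \<Sum>j\<in>R. x k * Y k j * x j) = W"
    unfolding W_def by (subst sum.swap) (simp add: sym mult_ac)
  have b: "W - sQ * sU = - q * sQ"
  proof -
    have "(\<Sum>k\<in>Q. x k * ((\<Sum>j\<in>R. Y k j * x j) - sU)) = (\<Sum>k\<in>Q. x k * (-q))"
      using eqQ by simp
    then have "(\<Sum>k\<in>Q. \<Sum>j\<in>R. x k * Y k j * x j) - sQ * sU = - q * sQ" unfolding sQ_def
      by (simp add: algebra_simps sum_subtractf sum_distrib_left sum_distrib_right)
    then show ?thesis using W2 by simp
  qed
  have Wge: "W \<ge> - (sR * sQ)"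
  proof -
    have "W \<ge> (\<Sum>i\<in>R. \<Sum>j\<in>Q. - (x i * x j))" unfolding W_def
    proof (intro sum_mono)
      fix i j assume "i \<in> R" "j \<in> Q"
      then have xi: "x i > 0" and xj: "x j > 0" unfolding R_def Q_def P_def by auto
      have "\<bar>Y i j\<bar> \<le> 1" using Sign_abs_le sg by blast
      then have "- (x i * x j) \<le> Y i j * (x i * x j)" using xi xj
        by (smt (verit) abs_le_iff mult_le_cancel_right2 mult_pos_pos mult_minus_left)
      then show "- (x i * x j) \<le> x i * Y i j * x j" by (simp add: mult_ac)
    qed
    also have "(\<Sum>i\<in>R. \<Sum>j\<in>Q. - (x i * x j)) = - (sR * sQ)"
      unfolding sR_def sQ_def by (simp add: sum_negf sum_product)
    finally show ?thesis .
  qed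
  have xnn: "\<And>j. j \<in> P \<Longrightarrow> x j \<ge> 0" unfolding P_def by simp
  have sTR: "sT \<ge> sR" unfolding sT_def sR_def
    by (rule sum_mono2) (use RT xnn T_def in auto)
  have sUQ: "sU \<ge> sQ" unfolding sU_def sQ_def
    by (rule sum_mono2) (use QU xnn U_def in auto)
  have sRpos: "sR > 0" unfolding sR_def
  proof -
    have "x i0 \<le> sum x R" by (rule member_le_sum) (use i0R xnn R_def in auto)
    then show "sum x R > 0" using i0P P_def by simp
  qed
  have sQnn: "sQ \<ge> 0" unfolding sQ_def by (rule sum_nonneg) (use xnn Q_def in auto)
  have "sR * (sQ - q - sT) \<ge> 0" using a Wge by (simp add: algebra_simps)
  then have c1: "sQ \<ge> q + sT" using sRpos by (simp add: zero_le_mult_iff)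
  have "W = sQ * sU - q * sQ" using b by simp
  also have "\<dots> \<ge> sQ * sQ - q * sQ" using sUQ sQnn by (simp add: mult_left_mono)
  finally have "W \<ge> sQ * (sQ - q)" by (simp add: algebra_simps)
  moreover have "sQ * (sQ - q) \<ge> 0" using c1 sQnn sTR sRpos by simp
  moreover have "W < 0"
  proof -
    have "sR * sT > 0" using sRpos sTR by simp
    moreover have "q * sR \<ge> 0" using q sRpos by simp
    ultimately show ?thesis using a by linarith
  qed
  ultimately show False by simp
qed



lemma half:
  fixes a x :: "'n::finite \<Rightarrow> real" and Y :: "'n \<Rightarrow> 'n \<Rightarrow> real"
  assumes sym: "\<And>i j. Y i j = Y j i"
    and sg: "\<And>i j. Y i j \<in> Sign (x i * x j - a i * a j)"
    and anneg: "\<And>i. a i \<ge> 0"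
    and az: "\<And>i. a i = 0 \<Longrightarrow> x i = 0"
    and rows0: "\<And>i. (\<Sum>j\<in>UNIV. Y i j * x j) = 0"
  shows "(\<forall>i. x i > 0 \<longrightarrow> x i \<le> a i) \<and> ((\<exists>i. 0 < x i \<and> x i < a i) \<longrightarrow> sum x UNIV = 0)
         \<and> ((\<exists>i. 0 < x i) \<longrightarrow> sum x UNIV \<ge> 0)"
proof -
  define P where "P = {j. x j > 0}"
  define q where "q = - (\<Sum>j\<in>UNIV - P. x j)"
  have apos: "a i > 0" if "x i > 0" for i
    using anneg[of i] az[of i] that by force
  have q0: "q \<ge> 0" unfolding q_def
    using sum_nonpos[of "UNIV - P" x] P_def by force
  have sumx: "sum x UNIV = sum x P - q" unfolding q_def
    using sum.subset_diff[of P UNIV x] by simp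
  have rows: "(\<Sum>j\<in>P. Y i j * x j) = -q" if xi: "x i > 0" for i
  proof -
    have "(\<Sum>j\<in>UNIV - P. Y i j * x j) = (\<Sum>j\<in>UNIV - P. - x j)"
    proof (rule sum.cong)
      fix j assume "j \<in> UNIV - P"
      then have xj: "x j \<le> 0" unfolding P_def by simp
      show "Y i j * x j = - x j"
      proof (cases "x j = 0")
        case False
        then have "x j < 0" using xj by simp
        then have "x i * x j < 0" using xi by (simp add: mult_pos_neg)
        moreover have "a i * a j \<ge> 0" using anneg by simp
        ultimately have "Y i j = -1" using Sign_neg sg by (metis diff_less_0_iff_less less_le_trans)
        then show ?thesis by simp
      qed simp
    qed simp
    also have "\<dots> = q" unfolding q_def by (simp add: sum_negf)
    finally have e1: "(\<Sum>j\<in>UNIV - P. Y i j * x j) = q" .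
    have "0 = (\<Sum>j\<in>UNIV - P. Y i j * x j) + (\<Sum>j\<in>P. Y i j * x j)"
      using rows0[of i] sum.subset_diff[of P UNIV "\<lambda>j. Y i j * x j"] by simp
    then show ?thesis using e1 by simp
  qed
  have H1: "\<forall>i. x i > 0 \<longrightarrow> x i \<le> a i"
  proof (intro allI impI)
    fix i assume "x i > 0"
    show "x i \<le> a i"
      by (rule block[of Y x a q i]) (use sym sg apos q0 rows P_def \<open>x i > 0\<close> in auto)
  qed
  have H2: "sum x UNIV = 0" if "0 < x i" "x i < a i" for i
  proof -
    have "(\<Sum>j\<in>P. Y i j * x j) = (\<Sum>j\<in>P. - x j)"
    proof (rule sum.cong)
      fix j assume "j \<in> P"
      then have xj: "x j > 0" "x j \<le> a j" using H1 P_def by auto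
      have "x i * x j < a i * x j" using that xj by simp
      also have "\<dots> \<le> a i * a j" using xj that by (intro mult_left_mono) auto
      finally have "Y i j = -1" using Sign_neg sg by (metis diff_less_0_iff_less)
      then show "Y i j * x j = - x j" by simp
    qed simp
    then have "sum x P = q" using rows[OF that(1)] by (simp add: sum_negf)
    then show ?thesis using sumx by simp
  qed
  have H3: "sum x UNIV \<ge> 0" if "0 < x i" for i
  proof -
    have "(\<Sum>j\<in>P. - x j) \<le> (\<Sum>j\<in>P. Y i j * x j)"
    proof (rule sum_mono)
      fix j assume "j \<in> P"
      then have xj: "x j > 0" using P_def by auto
      have "\<bar>Y i j\<bar> \<le> 1" using Sign_abs_le sg by blast
      then have "- 1 \<le> Y i j" by simp
      then have "(-1) * x j \<le> Y i j * x j" using xj by (intro mult_right_mono) auto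
      then show "- x j \<le> Y i j * x j" by simp
    qed
    then have "sum x P \<ge> q" using rows[OF that] by (simp add: sum_negf)
    then show ?thesis using sumx by simp
  qed
  show ?thesis using H1 H2 H3 by blast
qed



lemma reduced:
  fixes a x :: "'n::finite \<Rightarrow> real" and Y :: "'n \<Rightarrow> 'n \<Rightarrow> real"
  assumes sym: "\<And>i j. Y i j = Y j i"
    and sg: "\<And>i j. Y i j \<in> Sign (x i * x j - a i * a j)"
    and anneg: "\<And>i. a i \<ge> 0"
    and az: "\<And>i. a i = 0 \<Longrightarrow> x i = 0"
    and rows0: "\<And>i. (\<Sum>j\<in>UNIV. Y i j * x j) = 0"
    and ne1: "x \<noteq> a" and ne2: "x \<noteq> (\<lambda>i. - a i)"
  shows "(\<forall>i. \<bar>x i\<bar> \<le> a i) \<and> sum x UNIV = 0"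
proof -
  note h = half[of Y x a, OF sym sg anneg az rows0]
  have sg': "\<And>i j. Y i j \<in> Sign ((- x i) * (- x j) - a i * a j)" using sg by simp
  have az': "\<And>i. a i = 0 \<Longrightarrow> - x i = 0" using az by simp
  have rows0': "\<And>i. (\<Sum>j\<in>UNIV. Y i j * (- x j)) = 0" using rows0 by (simp add: sum_negf)
  note h' = half[of Y "\<lambda>i. - x i" a, OF sym sg' anneg az' rows0']
  have sneg: "sum (\<lambda>i. - x i) UNIV = - sum x UNIV" by (simp add: sum_negf)
  have A: "\<forall>i. \<bar>x i\<bar> \<le> a i"
  proof
    fix i show "\<bar>x i\<bar> \<le> a i"
    proof -
      consider "x i > 0" | "x i < 0" | "x i = 0" by linarith
      then show ?thesis
      proof cases
        case 1 then show ?thesis using h by auto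
      next
        case 2 then show ?thesis using h' by force
      next
        case 3 then show ?thesis using anneg[of i] by simp
      qed
    qed
  qed
  have B: "sum x UNIV = 0"
  proof (cases "\<exists>i. 0 < x i \<and> x i < a i")
    case True then show ?thesis using h by blast
  next
    case F1: False
    show ?thesis
    proof (cases "\<exists>i. 0 < - x i \<and> - x i < a i")
      case True then show ?thesis using h' sneg by simp
    next
      case F2: False
      show ?thesis
      proof (cases "\<exists>i. x i = 0 \<and> a i > 0")
        case True
        then obtain i where xi: "x i = 0" "a i > 0" by blast
        have "(\<Sum>j\<in>UNIV. Y i j * x j) = (\<Sum>j\<in>UNIV. - x j)"
        proof (rule sum.cong)
          fix j
          show "Y i j * x j = - x j"
          proof (cases "x j = 0")
            case False
            then have "a j > 0" using az anneg[of j] by force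
            then have "x i * x j - a i * a j < 0" using xi by simp
            then have "Y i j = -1" using Sign_neg sg by blast
            then show ?thesis by simp
          qed simp
        qed simp
        then show ?thesis using rows0[of i] by (simp add: sum_negf)
      next
        case F3: False
        have eqs: "\<And>i. x i = a i \<or> x i = - a i"
        proof -
          fix i
          have "\<bar>x i\<bar> \<le> a i" using A by blast
          consider "x i > 0" | "x i < 0" | "x i = 0" by linarith
          then show "x i = a i \<or> x i = - a i"
          proof cases
            case 1 then show ?thesis using F1 \<open>\<bar>x i\<bar> \<le> a i\<close> by force
          next
            case 2 then show ?thesis using F2 \<open>\<bar>x i\<bar> \<le> a i\<close> by force
          next
            case 3 then show ?thesis using F3 anneg[of i] by force
          qed
        qed
        obtain i where "x i \<noteq> a i" using ne1 by auto
        then have "x i = - a i" "x i \<noteq> a i" using eqs by auto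
        then have ni: "x i < 0" using anneg[of i] by auto
        obtain k where "x k \<noteq> - a k" using ne2 by auto
        then have "x k = a k" "x k \<noteq> - a k" using eqs by auto
        then have pk: "x k > 0" using anneg[of k] by auto
        have "sum x UNIV \<ge> 0" using h pk by blast
        moreover have "sum (\<lambda>i. - x i) UNIV \<ge> 0" using h' ni by auto
        ultimately show ?thesis using sneg by simp
      qed
    qed
  qed
  show ?thesis using A B by blast
qed



lemma get_Z:
  fixes s u :: "real^'n"
  assumes "stationary s u"
  obtains Z :: "real^'n^'n" where "\<And>i j. Z$i$j = Z$j$i"
    "\<And>i j. Z$i$j \<in> Sign (u$i * u$j - s$i * s$j)"
    "\<And>i. (\<Sum>j\<in>UNIV. Z$i$j * u$j) = 0"
proof -
  from assms obtain Z :: "real^'n^'n" where Z: "Z *v u = 0" "transpose Z = Z"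
      "\<forall>i j. Z $ i $ j \<in> Sign (u $ i * u $ j - s $ i * s $ j)"
    unfolding stationary_def rpca_subdiff_def by auto
  have "\<And>i j. Z$i$j = Z$j$i" using Z(2) by (metis transpose_def vec_lambda_beta)
  moreover have "\<And>i. (\<Sum>j\<in>UNIV. Z$i$j * u$j) = 0"
  proof -
    fix i
    have "(Z *v u)$i = 0" using Z(1) by simp
    then show "(\<Sum>j\<in>UNIV. Z$i$j * u$j) = 0" by (simp add: matrix_vector_mult_def)
  qed
  ultimately show ?thesis using that Z(3) by blast
qed

lemma F1:
  fixes s u :: "real^'n" and Z :: "real^'n^'n"
  assumes sg: "\<And>i j. Z$i$j \<in> Sign (u$i * u$j - s$i * s$j)"
    and rows: "\<And>i. (\<Sum>j\<in>UNIV. Z$i$j * u$j) = 0"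
    and si: "s$i = 0"
  shows "u$i = 0"
proof (rule ccontr)
  assume ui: "u$i \<noteq> 0"
  have "(\<Sum>j\<in>UNIV. Z$i$j * u$j) = (\<Sum>j\<in>UNIV. sgn (u$i) * \<bar>u$j\<bar>)"
  proof (rule sum.cong)
    fix j
    show "Z$i$j * u$j = sgn (u$i) * \<bar>u$j\<bar>"
    proof (cases "u$j = 0")
      case False
      have m: "u$i * u$j - s$i * s$j = u$i * u$j" using si by simp
      show ?thesis
      proof (cases "u$i * u$j > 0")
        case True
        then have "Z$i$j = 1" using sg[of i j] m Sign_pos by metis
        then show ?thesis using True
          by (cases "u$i > 0") (auto simp: zero_less_mult_iff)
      next
        case False
        then have "u$i * u$j < 0" using ui \<open>u$j \<noteq> 0\<close> by (simp add: not_less less_le)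
        then have "Z$i$j = -1" using sg[of i j] m Sign_neg by metis
        then show ?thesis using \<open>u$i * u$j < 0\<close>
          by (cases "u$i > 0") (auto simp: mult_less_0_iff)
      qed
    qed simp
  qed simp
  also have "\<dots> = sgn (u$i) * (\<Sum>j\<in>UNIV. \<bar>u$j\<bar>)" by (simp add: sum_distrib_left)
  finally have "(\<Sum>j\<in>UNIV. \<bar>u$j\<bar>) = 0" using rows[of i] ui by (simp add: sgn_eq_0_iff)
  moreover have "\<bar>u$i\<bar> \<le> (\<Sum>j\<in>UNIV. \<bar>u$j\<bar>)" by (rule member_le_sum) auto
  ultimately show False using ui by simp
qed

lemma structural:
  fixes s u :: "real^'n"
  assumes "spurious_stationary s u"
  shows "(\<forall>i. \<bar>u$i\<bar> \<le> \<bar>s$i\<bar>) \<and> (\<Sum>i\<in>UNIV. sgn (s$i) * u$i) = 0"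
proof -
  have st: "stationary s u" and ne: "u \<noteq> s" "u \<noteq> - s"
    using assms unfolding spurious_stationary_def by auto
  obtain Z :: "real^'n^'n" where Zsym: "\<And>i j. Z$i$j = Z$j$i"
    and Zsg: "\<And>i j. Z$i$j \<in> Sign (u$i * u$j - s$i * s$j)"
    and Zrow: "\<And>i. (\<Sum>j\<in>UNIV. Z$i$j * u$j) = 0"
    using get_Z[OF st] by blast
  note f1 = F1[of Z u s, OF Zsg Zrow]
  define Y where "Y i j = sgn (s$i) * sgn (s$j) * Z$i$j" for i j
  define x where "x i = sgn (s$i) * u$i" for i
  define a where "a i = \<bar>s$i\<bar>" for i
  have sgsq: "\<And>i. sgn (s$i) * sgn (s$i) * u$i = u$i"
  proof -
    fix i show "sgn (s$i) * sgn (s$i) * u$i = u$i"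
      using f1[of i] by (cases "s$i > 0"; cases "s$i < 0") (auto simp: sgn_if)
  qed
  have sym: "\<And>i j. Y i j = Y j i" unfolding Y_def using Zsym by (simp add: mult_ac)
  have sg: "\<And>i j. Y i j \<in> Sign (x i * x j - a i * a j)"
  proof -
    fix i j
    show "Y i j \<in> Sign (x i * x j - a i * a j)"
    proof (cases "s$i = 0 \<or> s$j = 0")
      case True
      then have "x i * x j - a i * a j = 0" "Y i j = 0"
        unfolding x_def a_def Y_def by auto
      then show ?thesis by (simp add: Sign_def)
    next
      case False
      define c where "c = sgn (s$i) * sgn (s$j)"
      have c: "c = 1 \<or> c = -1" using False unfolding c_def
        by (cases "s$i > 0"; cases "s$j > 0") (auto simp: sgn_if)
      have "x i * x j - a i * a j = c * (u$i * u$j - s$i * s$j)"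
        unfolding x_def a_def c_def by (simp add: abs_sgn algebra_simps)
      moreover have "Y i j = c * Z$i$j" unfolding Y_def c_def by simp
      ultimately show ?thesis using Sign_flip[OF c Zsg[of i j]] by simp
    qed
  qed
  have anneg: "\<And>i. a i \<ge> 0" unfolding a_def by simp
  have az: "\<And>i. a i = 0 \<Longrightarrow> x i = 0" unfolding a_def x_def by simp
  have rows0: "\<And>i. (\<Sum>j\<in>UNIV. Y i j * x j) = 0"
  proof -
    fix i
    have "(\<Sum>j\<in>UNIV. Y i j * x j) = (\<Sum>j\<in>UNIV. sgn (s$i) * (Z$i$j * u$j))"
    proof (rule sum.cong)
      fix j
      have "Y i j * x j = sgn (s$i) * (Z$i$j * (sgn (s$j) * sgn (s$j) * u$j))"
        unfolding Y_def x_def by (simp add: mult_ac)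
      then show "Y i j * x j = sgn (s$i) * (Z$i$j * u$j)" using sgsq by simp
    qed simp
    also have "\<dots> = 0" using Zrow[of i] by (simp flip: sum_distrib_left)
    finally show "(\<Sum>j\<in>UNIV. Y i j * x j) = 0" .
  qed
  have ne1: "x \<noteq> a"
  proof
    assume "x = a"
    then have "\<And>i. sgn (s$i) * u$i = \<bar>s$i\<bar>" unfolding x_def a_def by metis
    then have h: "\<And>i. sgn (s$i) * u$i = \<bar>s$i\<bar>" .
    have "u$i = s$i" for i
    proof -
      consider "s$i = 0" | "s$i > 0" | "s$i < 0" by linarith
      then show ?thesis using h[of i] f1[of i] by cases auto
    qed
    then show False using ne(1) by (simp add: vec_eq_iff)
  qed
  have ne2: "x \<noteq> (\<lambda>i. - a i)"
  proof
    assume "x = (\<lambda>i. - a i)"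
    then have "\<And>i. sgn (s$i) * u$i = - \<bar>s$i\<bar>" unfolding x_def a_def by metis
    then have h: "\<And>i. sgn (s$i) * u$i = - \<bar>s$i\<bar>" .
    have "u$i = - s$i" for i
    proof -
      consider "s$i = 0" | "s$i > 0" | "s$i < 0" by linarith
      then show ?thesis using h[of i] f1[of i] by cases auto
    qed
    then show False using ne(2) by (simp add: vec_eq_iff)
  qed
  have R: "(\<forall>i. \<bar>x i\<bar> \<le> a i) \<and> sum x UNIV = 0"
    by (rule reduced[of Y x a]) (use sym sg anneg az rows0 ne1 ne2 in auto)
  have "\<forall>i. \<bar>u$i\<bar> \<le> \<bar>s$i\<bar>"
  proof
    fix i
    show "\<bar>u$i\<bar> \<le> \<bar>s$i\<bar>"
    proof (cases "s$i = 0")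
      case True then show ?thesis using f1 by simp
    next
      case False
      then have "\<bar>x i\<bar> = \<bar>u$i\<bar>" unfolding x_def by (simp add: abs_mult abs_sgn_eq)
      then show ?thesis using R a_def by metis
    qed
  qed
  moreover have "(\<Sum>i\<in>UNIV. sgn (s$i) * u$i) = 0" using R unfolding x_def by simp
  ultimately show ?thesis by blast
qed



lemma entry:
  fixes u1 u2 w1 w2 t :: real
  assumes h1: "\<bar>u1\<bar> \<le> \<bar>w1\<bar>" and h2: "\<bar>u2\<bar> \<le> \<bar>w2\<bar>" and t: "0 \<le> t" "t \<le> 1"
  shows "\<bar>(u1 + t*(w1-u1))*(u2 + t*(w2-u2)) - w1* w2\<bar>
         = \<bar>w1\<bar>*\<bar>w2\<bar> - (sgn w1*(u1 + t*(w1-u1)))*(sgn w2*(u2 + t*(w2-u2)))"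
proof -
  define v1 where "v1 = u1 + t*(w1-u1)"
  define v2 where "v2 = u2 + t*(w2-u2)"
  have vb: "\<bar>v\<bar> \<le> \<bar>s\<bar>" if "v = uu + t*(s-uu)" "\<bar>uu\<bar> \<le> \<bar>s\<bar>" for v uu s :: real
  proof -
    have "v = (1-t)* uu + t* s" using that by (simp add: algebra_simps)
    then have "\<bar>v\<bar> \<le> (1-t)*\<bar>uu\<bar> + t*\<bar>s\<bar>" using t
      by (metis abs_mult abs_of_nonneg abs_triangle_ineq diff_ge_0_iff_ge)
    also have "\<dots> \<le> (1-t)*\<bar>s\<bar> + t*\<bar>s\<bar>" using t that(2) by (intro add_right_mono mult_left_mono) auto
    finally show ?thesis by (simp add: algebra_simps)
  qed
  have b1: "\<bar>v1\<bar> \<le> \<bar>w1\<bar>" using vb[OF v1_def h1] .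
  have b2: "\<bar>v2\<bar> \<le> \<bar>w2\<bar>" using vb[OF v2_def h2] .
  have pb: "\<bar>v1* v2\<bar> \<le> \<bar>w1* w2\<bar>" unfolding abs_mult using b1 b2 by (intro mult_mono) auto
  have "\<bar>v1* v2 - w1* w2\<bar> = \<bar>w1\<bar>*\<bar>w2\<bar> - (sgn w1* v1)*(sgn w2* v2)"
  proof (cases "w1 = 0 \<or> w2 = 0")
    case True
    then have "v1 * v2 = 0" using b1 b2 by auto
    then show ?thesis using True by auto
  next
    case False
    then consider "w1* w2 > 0" | "w1* w2 < 0" by (metis mult_eq_0_iff linorder_neqE_linordered_idom)
    then show ?thesis
    proof cases
      case 1
      then have e: "sgn w1 * sgn w2 = 1" by (metis sgn_mult sgn_pos)
      have "v1 * v2 \<le> w1 * w2" using pb 1 abs_ge_self[of "v1 * v2"] by simp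
      then have "\<bar>v1 * v2 - w1 * w2\<bar> = w1 * w2 - v1 * v2" by simp
      moreover have "\<bar>w1\<bar>*\<bar>w2\<bar> = w1* w2" using 1 by (metis abs_mult abs_of_pos)
      moreover have "(sgn w1* v1)*(sgn w2* v2) = (sgn w1 * sgn w2)*(v1* v2)" by (simp add: mult_ac)
      ultimately show ?thesis using e by simp
    next
      case 2
      then have e: "sgn w1 * sgn w2 = -1" by (metis sgn_mult sgn_neg)
      have "v1 * v2 \<ge> w1 * w2" using pb 2 abs_ge_minus_self[of "v1 * v2"] by simp
      then have "\<bar>v1 * v2 - w1 * w2\<bar> = v1 * v2 - w1 * w2" by simp
      moreover have "\<bar>w1\<bar>*\<bar>w2\<bar> = - (w1* w2)" using 2 by (metis abs_mult abs_of_neg)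
      moreover have "(sgn w1* v1)*(sgn w2* v2) = (sgn w1 * sgn w2)*(v1* v2)" by (simp add: mult_ac)
      ultimately show ?thesis using e by simp
    qed
  qed
  then show ?thesis unfolding v1_def v2_def .
qed

lemma line_formula:
  fixes s u :: "real^'n"
  assumes bnd: "\<forall>i. \<bar>u$i\<bar> \<le> \<bar>s$i\<bar>" and sm: "(\<Sum>i\<in>UNIV. sgn (s$i) * u$i) = 0"
    and t: "0 \<le> t" "t \<le> 1"
  shows "rpca_f s (u + t *\<^sub>R (s - u)) = (l1norm s)\<^sup>2 / 2 * (1 - t\<^sup>2)"
proof -
  define y where "y i = sgn (s$i) * (u$i + t * (s$i - u$i))" for i
  have e: "\<bar>(u + t *\<^sub>R (s - u))$i * (u + t *\<^sub>R (s - u))$j - s$i * s$j\<bar> = \<bar>s$i\<bar> * \<bar>s$j\<bar> - y i * y j" for i j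
    using entry[of "u$i" "s$i" "u$j" "s$j" t] bnd t unfolding y_def by simp
  have "rpca_f s (u + t *\<^sub>R (s - u)) = (1/2) * (\<Sum>i\<in>UNIV. \<Sum>j\<in>UNIV. \<bar>s$i\<bar> * \<bar>s$j\<bar> - y i * y j)"
    unfolding rpca_f_def e ..
  also have "(\<Sum>i\<in>UNIV. \<Sum>j\<in>UNIV. \<bar>s$i\<bar> * \<bar>s$j\<bar> - y i * y j) = (l1norm s)\<^sup>2 - (sum y UNIV)\<^sup>2"
    unfolding l1norm_def power2_eq_square sum_product by (simp add: sum_subtractf)
  also have "sum y UNIV = t * l1norm s"
  proof -
    have "sum y UNIV = (\<Sum>i\<in>UNIV. (1-t) * (sgn (s$i) * u$i) + t * \<bar>s$i\<bar>)"
      unfolding y_def by (intro sum.cong) (auto simp: algebra_simps abs_sgn)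
    also have "\<dots> = (1-t) * (\<Sum>i\<in>UNIV. sgn (s$i) * u$i) + t * l1norm s"
      unfolding l1norm_def by (simp add: sum.distrib sum_distrib_left)
    finally show ?thesis using sm by simp
  qed
  finally show ?thesis by (simp add: power_mult_distrib algebra_simps)
qed

definition Dd :: "real^'n \<Rightarrow> real^'n \<Rightarrow> real^'n \<Rightarrow> real" where
  "Dd s u d = (1/2) * (\<Sum>i\<in>UNIV. \<Sum>j\<in>UNIV.
      phi (u$i * u$j - s$i * s$j) (u$i * d$j + d$i * u$j))"

lemma entry_expand:
  fixes s u d :: "real^'n"
  shows "(u + t *\<^sub>R d)$i * (u + t *\<^sub>R d)$j - s$i * s$j
   = (u$i * u$j - s$i * s$j) + (u$i * d$j + d$i * u$j) * t + (d$i * d$j) * t\<^sup>2"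
  by (simp add: algebra_simps power2_eq_square)

lemma f_expand:
  fixes s u d :: "real^'n"
  shows "rpca_f s (u + t *\<^sub>R d) = (1/2) * (\<Sum>i\<in>UNIV. \<Sum>j\<in>UNIV.
      \<bar>(u$i * u$j - s$i * s$j) + (u$i * d$j + d$i * u$j) * t + (d$i * d$j) * t\<^sup>2\<bar>)"
  unfolding rpca_f_def entry_expand ..

lemma dd_tendsto:
  fixes s u d :: "real^'n"
  shows "((\<lambda>t. (rpca_f s (u + t *\<^sub>R d) - rpca_f s u) / t) \<longlongrightarrow> Dd s u d) (at_right 0)"
proof -
  define X where "X t i j = \<bar>(u$i * u$j - s$i * s$j) + (u$i * d$j + d$i * u$j) * t + (d$i * d$j) * t\<^sup>2\<bar>" for t i j
  define Y where "Y i j = \<bar>u$i * u$j - s$i * s$j\<bar>" for i j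
  have eq: "(rpca_f s (u + t *\<^sub>R d) - rpca_f s u) / t = (1/2) * (\<Sum>i\<in>UNIV. \<Sum>j\<in>UNIV. (X t i j - Y i j) / t)" for t
  proof -
    have "rpca_f s (u + t *\<^sub>R d) - rpca_f s u = (1/2) * ((\<Sum>i\<in>UNIV. \<Sum>j\<in>UNIV. X t i j) - (\<Sum>i\<in>UNIV. \<Sum>j\<in>UNIV. Y i j))"
      unfolding f_expand X_def Y_def by (simp add: rpca_f_def right_diff_distrib)
    also have "\<dots> = (1/2) * (\<Sum>i\<in>UNIV. \<Sum>j\<in>UNIV. X t i j - Y i j)"
      by (simp add: sum_subtractf)
    finally show ?thesis by (simp add: sum_divide_distrib mult.commute[of 2 t])
  qed
  show ?thesis unfolding eq Dd_def X_def Y_def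
    by (intro tendsto_mult tendsto_const tendsto_sum scalar_lim)
qed

lemma dirderiv_eq: "dirderiv (rpca_f s) u d = Dd s u d"
  unfolding dirderiv_def
  by (rule tendsto_Lim[OF trivial_limit_at_right_real dd_tendsto])

lemma second_lower:
  fixes s u d :: "real^'n"
  assumes t: "t > 0"
  shows "rpca_f s (u + t *\<^sub>R d) - rpca_f s u - t * Dd s u d \<ge> - (t\<^sup>2 / 2 * (l1norm d)\<^sup>2)"
proof -
  define c where "c i j = u$i * u$j - s$i * s$j" for i j
  define b where "b i j = u$i * d$j + d$i * u$j" for i j
  define a where "a i j = d$i * d$j" for i j
  have E1: "rpca_f s (u + t *\<^sub>R d) - rpca_f s u - t * Dd s u d = (1/2) * ((\<Sum>i\<in>UNIV. \<Sum>j\<in>UNIV. \<bar>c i j + b i j * t + a i j * t\<^sup>2\<bar>)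
      - (\<Sum>i\<in>UNIV. \<Sum>j\<in>UNIV. \<bar>c i j\<bar>) - (\<Sum>i\<in>UNIV. \<Sum>j\<in>UNIV. t * phi (c i j) (b i j)))"
    unfolding f_expand Dd_def a_def b_def c_def by (simp add: rpca_f_def sum_distrib_left algebra_simps)
  have E2: "(\<Sum>i\<in>UNIV. \<Sum>j\<in>UNIV. \<bar>c i j + b i j * t + a i j * t\<^sup>2\<bar>)
      - (\<Sum>i\<in>UNIV. \<Sum>j\<in>UNIV. \<bar>c i j\<bar>) - (\<Sum>i\<in>UNIV. \<Sum>j\<in>UNIV. t * phi (c i j) (b i j))
      = (\<Sum>i\<in>UNIV. \<Sum>j\<in>UNIV. \<bar>c i j + b i j * t + a i j * t\<^sup>2\<bar> - \<bar>c i j\<bar> - t * phi (c i j) (b i j))"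
    by (simp add: sum_subtractf)
  have E3: "(\<Sum>i\<in>UNIV. \<Sum>j\<in>UNIV. - (t\<^sup>2 * \<bar>a i j\<bar>)) \<le> (\<Sum>i\<in>UNIV. \<Sum>j\<in>UNIV. \<bar>c i j + b i j * t + a i j * t\<^sup>2\<bar> - \<bar>c i j\<bar> - t * phi (c i j) (b i j))"
    by (intro sum_mono scalar_ineq[OF t])
  have E4: "(\<Sum>i\<in>UNIV. \<Sum>j\<in>UNIV. - (t\<^sup>2 * \<bar>a i j\<bar>)) = - (t\<^sup>2 * (l1norm d)\<^sup>2)"
    unfolding l1norm_def power2_eq_square[of "sum _ _"] sum_product a_def
    by (simp add: sum_negf sum_distrib_left abs_mult algebra_simps)
  define X where "X = (\<Sum>i\<in>UNIV. \<Sum>j\<in>UNIV. \<bar>c i j + b i j * t + a i j * t\<^sup>2\<bar> - \<bar>c i j\<bar> - t * phi (c i j) (b i j))"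
  have "rpca_f s (u + t *\<^sub>R d) - rpca_f s u - t * Dd s u d = (1/2) * X"
    using E1 E2 unfolding X_def by simp
  moreover have "(1/2) * X \<ge> (1/2) * (- (t\<^sup>2 * (l1norm d)\<^sup>2))"
    using E3 E4 unfolding X_def by simp
  ultimately show ?thesis by simp
qed

lemma Z_lower:
  fixes s u y :: "real^'n" and Z :: "real^'n^'n"
  assumes Zsym: "\<And>i j. Z$i$j = Z$j$i"
    and Zsg: "\<And>i j. Z$i$j \<in> Sign (u$i * u$j - s$i * s$j)"
    and Zrow: "\<And>i. (\<Sum>j\<in>UNIV. Z$i$j * u$j) = 0"
  shows "rpca_f s (u + y) \<ge> rpca_f s u - (l1norm y)\<^sup>2 / 2"
proof -
  define M where "M i j = u$i * u$j - s$i * s$j" for i j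
  have ex: "(u + y)$i * (u + y)$j - s$i * s$j = M i j + y$i * u$j + u$i * y$j + y$i * y$j" for i j
    unfolding M_def by (simp add: algebra_simps)
  have zb: "\<bar>Z$i$j * m\<bar> \<le> \<bar>m\<bar>" for i j m
  proof -
    have "\<bar>Z$i$j\<bar> \<le> 1" using Sign_abs_le Zsg by blast
    then show ?thesis unfolding abs_mult by (simp add: mult_left_le_one_le)
  qed
  have S1: "(\<Sum>i\<in>UNIV. \<Sum>j\<in>UNIV. \<bar>(u + y)$i * (u + y)$j - s$i * s$j\<bar>)
      \<ge> (\<Sum>i\<in>UNIV. \<Sum>j\<in>UNIV. Z$i$j * M i j + Z$i$j * (y$i * u$j) + Z$i$j * (u$i * y$j) + Z$i$j * (y$i * y$j))"
  proof (intro sum_mono)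
    fix i j
    have "Z$i$j * ((u + y)$i * (u + y)$j - s$i * s$j) \<le> \<bar>(u + y)$i * (u + y)$j - s$i * s$j\<bar>"
      using zb[of i j "(u + y)$i * (u + y)$j - s$i * s$j"] by linarith
    then show "Z$i$j * M i j + Z$i$j * (y$i * u$j) + Z$i$j * (u$i * y$j) + Z$i$j * (y$i * y$j) \<le> \<bar>(u + y)$i * (u + y)$j - s$i * s$j\<bar>"
      unfolding ex by (simp add: algebra_simps)
  qed
  have S2: "(\<Sum>i\<in>UNIV. \<Sum>j\<in>UNIV. Z$i$j * M i j + Z$i$j * (y$i * u$j) + Z$i$j * (u$i * y$j) + Z$i$j * (y$i * y$j))
       = (\<Sum>i\<in>UNIV. \<Sum>j\<in>UNIV. Z$i$j * M i j) + (\<Sum>i\<in>UNIV. \<Sum>j\<in>UNIV. Z$i$j * (y$i * u$j))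
       + (\<Sum>i\<in>UNIV. \<Sum>j\<in>UNIV. Z$i$j * (u$i * y$j)) + (\<Sum>i\<in>UNIV. \<Sum>j\<in>UNIV. Z$i$j * (y$i * y$j))"
    by (simp add: sum.distrib)
  have S3: "(\<Sum>i\<in>UNIV. \<Sum>j\<in>UNIV. Z$i$j * (y$i * u$j)) = 0"
  proof -
    have "(\<Sum>i\<in>UNIV. \<Sum>j\<in>UNIV. Z$i$j * (y$i * u$j)) = (\<Sum>i\<in>UNIV. y$i * (\<Sum>j\<in>UNIV. Z$i$j * u$j))"
      by (simp add: sum_distrib_left mult_ac)
    then show ?thesis using Zrow by simp
  qed
  have S4: "(\<Sum>i\<in>UNIV. \<Sum>j\<in>UNIV. Z$i$j * (u$i * y$j)) = 0"
  proof -
    have "(\<Sum>i\<in>UNIV. \<Sum>j\<in>UNIV. Z$i$j * (u$i * y$j)) = (\<Sum>j\<in>UNIV. \<Sum>i\<in>UNIV. Z$i$j * (u$i * y$j))"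
      by (rule sum.swap)
    also have "\<dots> = (\<Sum>j\<in>UNIV. y$j * (\<Sum>i\<in>UNIV. Z$j$i * u$i))"
      by (simp add: sum_distrib_left mult_ac Zsym)
    finally show ?thesis using Zrow by simp
  qed
  have S5: "(\<Sum>i\<in>UNIV. \<Sum>j\<in>UNIV. Z$i$j * M i j) = (\<Sum>i\<in>UNIV. \<Sum>j\<in>UNIV. \<bar>u$i * u$j - s$i * s$j\<bar>)"
    unfolding M_def using Sign_mult_abs Zsg by (intro sum.cong) auto
  have S6: "(\<Sum>i\<in>UNIV. \<Sum>j\<in>UNIV. Z$i$j * (y$i * y$j)) \<ge> (\<Sum>i\<in>UNIV. \<Sum>j\<in>UNIV. - \<bar>y$i * y$j\<bar>)"
  proof (intro sum_mono)
    fix i j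
    show "- \<bar>y$i * y$j\<bar> \<le> Z$i$j * (y$i * y$j)" using zb[of i j "y$i * y$j"] by linarith
  qed
  have S7: "(\<Sum>i\<in>UNIV. \<Sum>j\<in>UNIV. - \<bar>y$i * y$j\<bar>) = - (l1norm y)\<^sup>2"
    unfolding l1norm_def power2_eq_square sum_product by (simp add: sum_negf abs_mult)
  show ?thesis unfolding rpca_f_def using S1 S2 S3 S4 S5 S6 S7 by linarith
qed



lemma l1norm_scale: "l1norm (c *\<^sub>R v) = \<bar>c\<bar> * l1norm v"
  unfolding l1norm_def by (simp add: abs_mult sum_distrib_left)

lemma l1norm_tendsto:
  assumes "(g \<longlongrightarrow> v) F"
  shows "((\<lambda>x. l1norm (g x)) \<longlongrightarrow> l1norm v) F"
  unfolding l1norm_def by (intro tendsto_intros assms)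

lemma at_right_le_nhds: "at_right (0::real) \<le> nhds 0"
  unfolding at_within_def by (rule inf_le1)

lemma pair_le: "filtermap (\<lambda>t. (t, w)) (at_right (0::real)) \<le> at_right (0::real) \<times>\<^sub>F nhds w"
proof -
  have "filterlim (\<lambda>t. (t, w)) (at_right (0::real) \<times>\<^sub>F nhds w) (at_right (0::real))"
    by (intro filterlim_Pair filterlim_ident tendsto_const)
  then show ?thesis unfolding filterlim_def .
qed

lemma Liminf_path:
  "Liminf (at_right (0::real) \<times>\<^sub>F nhds w) g \<le> Liminf (at_right 0) (\<lambda>t. g (t, w))"
  using Liminf_le_filter[OF pair_le, of w g] Liminf_filtermap_le[of "\<lambda>t. (t, w)" "at_right 0" g]
  by simp

lemma main_w:
  fixes s u :: "real^'n"
  assumes s0: "s \<noteq> 0" and sp: "spurious_stationary s u"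
  shows "second_subderiv (rpca_f s) u (s - u) = ereal (- (l1norm s)\<^sup>2)
         \<and> (INF z. parabolic_subderiv (rpca_f s) u (s - u) z) = ereal (- (l1norm s)\<^sup>2)
         \<and> (\<forall>\<epsilon>>0. \<exists>z. parabolic_subderiv (rpca_f s) u (s - u) z < ereal (- (l1norm s)\<^sup>2 + \<epsilon>))
         \<and> ((\<lambda>t. (rpca_f s (u + t *\<^sub>R (s - u)) - rpca_f s u - t * dirderiv (rpca_f s) u (s - u))
                  / (t\<^sup>2 / 2)) \<longlongrightarrow> - (l1norm s)\<^sup>2) (at_right 0)
         \<and> - (l1norm s)\<^sup>2 < 0"
proof -
  define w where "w = s - u"
  define S where "S = l1norm s"
  define f where "f = rpca_f s"
  have st: "stationary s u" using sp unfolding spurious_stationary_def by simp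
  obtain Z :: "real^'n^'n" where Zsym: "\<And>i j. Z$i$j = Z$j$i"
    and Zsg: "\<And>i j. Z$i$j \<in> Sign (u$i * u$j - s$i * s$j)"
    and Zrow: "\<And>i. (\<Sum>j\<in>UNIV. Z$i$j * u$j) = 0"
    using get_Z[OF st] by blast
  have struct: "(\<forall>i. \<bar>u$i\<bar> \<le> \<bar>s$i\<bar>) \<and> (\<Sum>i\<in>UNIV. sgn (s$i) * u$i) = 0"
    using structural[OF sp] .
  have L1: "f (u + t *\<^sub>R w) = S\<^sup>2 / 2 * (1 - t\<^sup>2)" if "0 \<le> t" "t \<le> 1" for t
    unfolding f_def S_def w_def using line_formula[of u s t] struct that by blast
  have L0: "f u = S\<^sup>2 / 2" using L1[of 0] by simp
  have evt: "\<forall>\<^sub>F t in at_right (0::real). 0 < t \<and> t < 1"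
    by (subst eventually_at_right[of 0 1]) (auto intro: exI[of _ 1])
  have dd0: "dirderiv f u w = 0"
  proof -
    have "((\<lambda>t. - (S\<^sup>2 / 2) * t) \<longlongrightarrow> - (S\<^sup>2 / 2) * 0) (at_right (0::real))"
      by (intro tendsto_intros)
    moreover have "\<forall>\<^sub>F t in at_right (0::real). - (S\<^sup>2 / 2) * t = (f (u + t *\<^sub>R w) - f u) / t"
      by (rule eventually_mono[OF evt]) (auto simp: L1 L0 field_simps power2_eq_square)
    ultimately have "((\<lambda>t. (f (u + t *\<^sub>R w) - f u) / t) \<longlongrightarrow> 0) (at_right (0::real))"
      using Lim_transform_eventually by fastforce
    then show ?thesis unfolding dirderiv_def by (rule tendsto_Lim[OF trivial_limit_at_right_real])
  qed
  have Qev: "\<forall>\<^sub>F t in at_right (0::real). (f (u + t *\<^sub>R w) - f u - t * dirderiv f u w) / (t\<^sup>2 / 2) = - S\<^sup>2"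
    by (rule eventually_mono[OF evt]) (auto simp: L1 L0 dd0 field_simps power2_eq_square)
  have iii: "((\<lambda>t. (f (u + t *\<^sub>R w) - f u - t * dirderiv f u w) / (t\<^sup>2 / 2)) \<longlongrightarrow> - S\<^sup>2) (at_right 0)"
  proof -
    have "\<forall>\<^sub>F t in at_right (0::real). - S\<^sup>2 = (f (u + t *\<^sub>R w) - f u - t * dirderiv f u w) / (t\<^sup>2 / 2)"
      using Qev by (simp add: eq_commute)
    then show ?thesis by (rule Lim_transform_eventually[OF tendsto_const])
  qed
  have l1w: "l1norm w = S"
  proof -
    have "\<bar>s$i - u$i\<bar> = \<bar>s$i\<bar> - sgn (s$i) * u$i" for i
    proof -
      have "\<bar>u$i\<bar> \<le> \<bar>s$i\<bar>" using struct by blast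
      then have b: "- \<bar>s$i\<bar> \<le> u$i" "u$i \<le> \<bar>s$i\<bar>" by (auto simp: abs_le_iff)
      consider "s$i > 0" | "s$i < 0" | "s$i = 0" by linarith
      then show ?thesis
      proof cases
        case 1 then show ?thesis using b by simp
      next
        case 2 then show ?thesis using b by simp
      next
        case 3 then show ?thesis using b by simp
      qed
    qed
    then have "l1norm w = (\<Sum>i\<in>UNIV. \<bar>s$i\<bar> - sgn (s$i) * u$i)" unfolding l1norm_def w_def by simp
    also have "\<dots> = S" unfolding S_def l1norm_def using struct by (simp add: sum_subtractf)
    finally show ?thesis .
  qed
  have Spos: "S > 0"
  proof -
    obtain i where "s$i \<noteq> 0" using s0 by (metis vec_eq_iff zero_index)
    moreover have "\<bar>s$i\<bar> \<le> S" unfolding S_def l1norm_def by (rule member_le_sum) auto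
    ultimately show ?thesis by simp
  qed
  have Fnb: "at_right (0::real) \<times>\<^sub>F nhds z \<noteq> bot" for z :: "real^'n"
    by (simp add: prod_filter_eq_bot)
  have evF: "\<forall>\<^sub>F p in at_right (0::real) \<times>\<^sub>F nhds z. 0 < fst p" for z :: "real^'n"
  proof -
    have "\<forall>\<^sub>F (t, y) in at_right (0::real) \<times>\<^sub>F nhds z. 0 < t"
      using eventually_prod1[where A="at_right (0::real)" and B="nhds z" and P="\<lambda>t. 0 < t"] eventually_at_right_less[of "0::real"]
      by simp
    then show ?thesis by (simp add: case_prod_unfold)
  qed
  have i: "second_subderiv f u w = ereal (- S\<^sup>2)"
  proof (rule antisym)
    define g where "g = (\<lambda>(t, w'). ereal ((f (u + t *\<^sub>R w') - f u - t * dirderiv f u w') / (t\<^sup>2 / 2)))"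
    have sd: "second_subderiv f u w = Liminf (at_right (0::real) \<times>\<^sub>F nhds w) g"
      unfolding second_subderiv_def g_def ..
    have "Liminf (at_right (0::real) \<times>\<^sub>F nhds w) g \<le> Liminf (at_right 0) (\<lambda>t. g (t, w))"
      by (rule Liminf_path)
    also have "Liminf (at_right 0) (\<lambda>t. g (t, w)) = Liminf (at_right (0::real)) (\<lambda>t. ereal (- S\<^sup>2))"
      by (rule Liminf_eq) (use Qev in \<open>simp add: g_def\<close>)
    also have "\<dots> = ereal (- S\<^sup>2)" by (rule Liminf_const) simp
    finally show "second_subderiv f u w \<le> ereal (- S\<^sup>2)" using sd by simp
    have lb: "\<forall>\<^sub>F p in at_right (0::real) \<times>\<^sub>F nhds w. ereal (- (l1norm (snd p))\<^sup>2) \<le> g p"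
    proof (rule eventually_mono[OF evF])
      fix p :: "real \<times> (real^'n)" assume "0 < fst p"
      obtain t w' where p: "p = (t, w')" by fastforce
      have t: "t > 0" using \<open>0 < fst p\<close> p by simp
      have "f (u + t *\<^sub>R w') - f u - t * dirderiv f u w' \<ge> - (t\<^sup>2 / 2 * (l1norm w')\<^sup>2)"
        unfolding f_def dirderiv_eq by (rule second_lower[OF t])
      then have "- (l1norm w')\<^sup>2 \<le> (f (u + t *\<^sub>R w') - f u - t * dirderiv f u w') / (t\<^sup>2 / 2)"
        using t by (simp add: field_simps)
      then show "ereal (- (l1norm (snd p))\<^sup>2) \<le> g p" unfolding g_def p by simp
    qed
    have tl: "((\<lambda>p. ereal (- (l1norm (snd p))\<^sup>2)) \<longlongrightarrow> ereal (- (l1norm w)\<^sup>2)) (at_right (0::real) \<times>\<^sub>F nhds w)"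
      by (intro tendsto_intros l1norm_tendsto filterlim_snd)
    have X: "Liminf (at_right (0::real) \<times>\<^sub>F nhds w) (\<lambda>p. ereal (- (l1norm (snd p))\<^sup>2)) = ereal (- S\<^sup>2)"
      using lim_imp_Liminf[OF Fnb tl] l1w by simp
    show "ereal (- S\<^sup>2) \<le> second_subderiv f u w" using sd X Liminf_mono[OF lb] by simp
  qed
  define pb where "pb z = parabolic_subderiv f u w z" for z
  have pb_lower: "ereal (- S\<^sup>2) \<le> pb z" for z
  proof -
    define g where "g = (\<lambda>(t, z'). ereal ((f (u + t *\<^sub>R w + ((1/2) * t\<^sup>2) *\<^sub>R z') - f u - t * dirderiv f u w) / (t\<^sup>2 / 2)))"
    have pd: "pb z = Liminf (at_right (0::real) \<times>\<^sub>F nhds z) g"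
      unfolding pb_def parabolic_subderiv_def g_def ..
    define h where "h p = w + (fst p / 2) *\<^sub>R snd p" for p :: "real \<times> (real^'n)"
    have lb: "\<forall>\<^sub>F p in at_right (0::real) \<times>\<^sub>F nhds z. ereal (- (l1norm (h p))\<^sup>2) \<le> g p"
    proof (rule eventually_mono[OF evF])
      fix p :: "real \<times> (real^'n)" assume "0 < fst p"
      obtain t z' where p: "p = (t, z')" by fastforce
      have t: "t > 0" using \<open>0 < fst p\<close> p by simp
      have eqy: "t *\<^sub>R w + ((1/2) * t\<^sup>2) *\<^sub>R z' = t *\<^sub>R h p"
        unfolding h_def p by (simp add: scaleR_add_right power2_eq_square)
      have "f (u + t *\<^sub>R h p) \<ge> f u - (l1norm (t *\<^sub>R h p))\<^sup>2 / 2"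
        unfolding f_def by (rule Z_lower[OF Zsym Zsg Zrow])
      also have "(l1norm (t *\<^sub>R h p))\<^sup>2 = t\<^sup>2 * (l1norm (h p))\<^sup>2"
        using t by (simp add: l1norm_scale power_mult_distrib)
      finally have "f (u + t *\<^sub>R h p) - f u \<ge> - (t\<^sup>2 / 2 * (l1norm (h p))\<^sup>2)" by simp
      then have "- (l1norm (h p))\<^sup>2 \<le> (f (u + t *\<^sub>R h p) - f u) / (t\<^sup>2 / 2)"
        using t by (simp add: field_simps)
      moreover have eqy': "u + t *\<^sub>R w + ((1/2) * t\<^sup>2) *\<^sub>R z' = u + t *\<^sub>R h p"
        using eqy by (simp add: add.assoc)
      moreover have "g (t, z') = ereal ((f (u + t *\<^sub>R h p) - f u - t * dirderiv f u w) / (t\<^sup>2 / 2))"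
        unfolding g_def case_prod_conv eqy' by (rule refl)
      ultimately show "ereal (- (l1norm (h p))\<^sup>2) \<le> g p" using p by (simp add: dd0)
    qed
    have th: "(h \<longlongrightarrow> w + (0 / 2) *\<^sub>R z) (at_right (0::real) \<times>\<^sub>F nhds z)"
    proof -
      have "(fst \<longlongrightarrow> (0::real)) (at_right (0::real) \<times>\<^sub>F nhds z)"
        using filterlim_mono[OF filterlim_fst[of "at_right (0::real)" "nhds z"] at_right_le_nhds order_refl] .
      then show ?thesis unfolding h_def
        by (intro tendsto_intros filterlim_snd) auto
    qed
    have tl: "((\<lambda>p. ereal (- (l1norm (h p))\<^sup>2)) \<longlongrightarrow> ereal (- (l1norm w)\<^sup>2)) (at_right (0::real) \<times>\<^sub>F nhds z)"
      using th by (intro tendsto_intros l1norm_tendsto) simp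
    have X: "Liminf (at_right (0::real) \<times>\<^sub>F nhds z) (\<lambda>p. ereal (- (l1norm (h p))\<^sup>2)) = ereal (- S\<^sup>2)"
      using lim_imp_Liminf[OF Fnb tl] l1w by simp
    show ?thesis using pd X Liminf_mono[OF lb] by simp
  qed
  have pb0: "pb 0 = ereal (- S\<^sup>2)"
  proof (rule antisym[OF _ pb_lower])
    define g where "g = (\<lambda>(t, z'). ereal ((f (u + t *\<^sub>R w + ((1/2) * t\<^sup>2) *\<^sub>R z') - f u - t * dirderiv f u w) / (t\<^sup>2 / 2)))"
    have pd: "pb 0 = Liminf (at_right (0::real) \<times>\<^sub>F nhds 0) g"
      unfolding pb_def parabolic_subderiv_def g_def ..
    have "Liminf (at_right (0::real) \<times>\<^sub>F nhds 0) g \<le> Liminf (at_right 0) (\<lambda>t. g (t, 0))"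
      by (rule Liminf_path)
    also have "Liminf (at_right 0) (\<lambda>t. g (t, 0)) = Liminf (at_right (0::real)) (\<lambda>t. ereal (- S\<^sup>2))"
      by (rule Liminf_eq) (use Qev in \<open>simp add: g_def\<close>)
    also have "\<dots> = ereal (- S\<^sup>2)" by (rule Liminf_const) simp
    finally show "pb 0 \<le> ereal (- S\<^sup>2)" using pd by simp
  qed
  have ii: "(INF z. pb z) = ereal (- S\<^sup>2)"
  proof (rule antisym)
    show "(INF z. pb z) \<le> ereal (- S\<^sup>2)" using pb0 by (metis INF_lower UNIV_I)
    show "ereal (- S\<^sup>2) \<le> (INF z. pb z)" using pb_lower by (simp add: le_INF_iff)
  qed
  have eps: "\<forall>\<epsilon>>0. \<exists>z. pb z < ereal (- S\<^sup>2 + \<epsilon>)"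
  proof (intro allI impI)
    fix \<epsilon> :: real assume "\<epsilon> > 0"
    then have "pb 0 < ereal (- S\<^sup>2 + \<epsilon>)" using pb0 by simp
    then show "\<exists>z. pb z < ereal (- S\<^sup>2 + \<epsilon>)" by blast
  qed
  have neg: "- S\<^sup>2 < 0" using Spos by simp
  show ?thesis using i ii eps iii neg
    unfolding pb_def f_def S_def w_def by simp
qed


lemma rpca_f_neg: "rpca_f (- s) = rpca_f s"
  unfolding rpca_f_def by (rule ext) simp

lemma l1norm_neg: "l1norm (- s) = l1norm s"
  unfolding l1norm_def by simp

lemma spurious_neg: "spurious_stationary (- s) u = spurious_stationary s u"
proof -
  have "rpca_subdiff (- s) u = rpca_subdiff s u" unfolding rpca_subdiff_def by simp
  then show ?thesis unfolding spurious_stationary_def stationary_def by auto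
qed

theorem corollary1:
  fixes ustar u w :: "real ^ 'n"
  assumes "ustar \<noteq> 0"
    and "spurious_stationary ustar u"
    and "w = ustar - u \<or> w = - ustar - u"
  shows "second_subderiv (rpca_f ustar) u w = ereal (- (l1norm ustar)\<^sup>2)
         \<and> (INF z. parabolic_subderiv (rpca_f ustar) u w z) = ereal (- (l1norm ustar)\<^sup>2)
         \<and> (\<forall>\<epsilon>>0. \<exists>z. parabolic_subderiv (rpca_f ustar) u w z < ereal (- (l1norm ustar)\<^sup>2 + \<epsilon>))
         \<and> ((\<lambda>t. (rpca_f ustar (u + t *\<^sub>R w) - rpca_f ustar u - t * dirderiv (rpca_f ustar) u w)
                  / (t\<^sup>2 / 2)) \<longlongrightarrow> - (l1norm ustar)\<^sup>2) (at_right 0)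
         \<and> - (l1norm ustar)\<^sup>2 < 0"
  using assms(3)
proof
  assume "w = ustar - u"
  then show ?thesis using main_w[OF assms(1,2)] by simp
next
  assume w: "w = - ustar - u"
  have "- ustar \<noteq> 0" using assms(1) by simp
  moreover have "spurious_stationary (- ustar) u" using spurious_neg[of ustar u] assms(2) by (rule iffD2)
  ultimately show ?thesis using main_w[of "- ustar" u] w by (simp add: rpca_f_neg l1norm_neg)
qed

end
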